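(* Let $d\ge2$, $n\in\mathbb N$, and let $T\subset[0,1)^d$ be a finite set such that $2\pi T:=\{2\pi\mathbf x:\mathbf x\in T\}$ provides universal discretization in $L_\infty$ for the collection $\mathcal C(n,d)$ with constant $C_1(d)>0$, i.e. $C_1(d)\|f\|_\infty\le\max_{\xi\in2\pi T}|f(\xi)|$ for every $f\in\mathcal T(R(\mathbf s))$ and every $\mathbf s\in\mathbb Z_+^d$ with $\|\mathbf s\|_1=n$. Then there exists a constant $C(d)>0$, depending only on $d$ and $C_1(d)$ (not on $n$ or $T$), such that $\mathrm{disp}(T)\le C(d)2^{-n}$.
   Context: $\mathbb T^d:=[0,2\pi)^d$; $\|f\|_\infty:=\sup_{\mathbf x}|f(\mathbf x)|$. For $\mathbf x<\mathbf y$ in $[0,1)^d$ (coordinatewise), $[\mathbf x,\mathbf y):=[x_1,y_1)\times\cdots\times[x_d,y_d)$, and $\mathcal B$ is the set of all such boxes. The dispersion of a finite $T\subset[0,1)^d$ is $\mathrm{disp}(T):=\sup\{\mathrm{vol}(B):B\in\mathcal B,\ B\cap T=\emptyset\}$. For finite $Q\subset\mathbb Z^d$, $\mathcal T(Q)$ is the space of trigonometric polynomials $\sum_{\mathbf k\in Q}c_{\mathbf k}e^{i(\mathbf k,\mathbf x)}$. For $\mathbf s\in\mathbb Z_+^d$, $R(\mathbf s):=\{\mathbf k\in\mathbb Z^d:|k_j|<2^{s_j}\ \forall j\}$ and $\mathcal C(n,d):=\{\mathcal T(R(\mathbf s)):\|\mathbf s\|_1=n\}$. *)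

theory Defs
  imports "HOL-Analysis.Analysis"
begin

text \<open>Points of [0,1)^d and of the torus are functions on a finite index type 'd
  (so d = CARD('d)). Frequencies are functions 'd \<Rightarrow> int.\<close>

definition unit_cube :: "('d::finite \<Rightarrow> real) set" where
  "unit_cube = {x. \<forall>j. 0 \<le> x j \<and> x j < 1}"

definition torus :: "('d::finite \<Rightarrow> real) set" where
  "torus = {x. \<forall>j. 0 \<le> x j \<and> x j < 2 * pi}"

definition hyperbolic_rect :: "('d::finite \<Rightarrow> nat) \<Rightarrow> ('d \<Rightarrow> int) set" where
  "hyperbolic_rect s = {k. \<forall>j. \<bar>k j\<bar> < 2 ^ (s j)}"

definition trig_poly :: "('d::finite \<Rightarrow> int) set \<Rightarrow> (('d \<Rightarrow> int) \<Rightarrow> complex) \<Rightarrow> ('d \<Rightarrow> real) \<Rightarrow> complex" where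
  "trig_poly Q c x = (\<Sum>k\<in>Q. c k * cis (\<Sum>j\<in>UNIV. real_of_int (k j) * x j))"

definition sup_norm :: "(('d::finite \<Rightarrow> real) \<Rightarrow> complex) \<Rightarrow> real" where
  "sup_norm f = (SUP x\<in>torus. cmod (f x))"

text \<open>Universal discretization in L_infinity of C(n,d) by the point set 2\<pi>T with constant C1:
  C1 ||f||_\<infinity> \<le> max_{\<xi>\<in>2\<pi>T} |f(\<xi>)| for all f in T(R(s)), ||s||_1 = n.
  (The maximum over a finite set is written via an existential witness.)\<close>
definition univ_disc :: "real \<Rightarrow> nat \<Rightarrow> ('d::finite \<Rightarrow> real) set \<Rightarrow> bool" where
  "univ_disc C1 n T \<longleftrightarrow>
     (\<forall>s::'d \<Rightarrow> nat. (\<Sum>j\<in>UNIV. s j) = n \<longrightarrow>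
        (\<forall>c. \<exists>\<xi>\<in>T. C1 * sup_norm (trig_poly (hyperbolic_rect s) c)
                     \<le> cmod (trig_poly (hyperbolic_rect s) c (\<lambda>j. 2 * pi * \<xi> j))))"

definition box_co :: "('d::finite \<Rightarrow> real) \<Rightarrow> ('d \<Rightarrow> real) \<Rightarrow> ('d \<Rightarrow> real) set" where
  "box_co x y = {z. \<forall>j. x j \<le> z j \<and> z j < y j}"

definition disp :: "('d::finite \<Rightarrow> real) set \<Rightarrow> real" where
  "disp T = Sup {(\<Prod>j\<in>UNIV. y j - x j) | x y.
      x \<in> unit_cube \<and> y \<in> unit_cube \<and> (\<forall>j. x j < y j) \<and> box_co x y \<inter> T = {}}"

end

theory Submission
  imports Defs
begin



definition G :: "nat \<Rightarrow> real \<Rightarrow> complex" where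
  "G N t = (\<Sum>a<N. cis t ^ a)"

lemma G_bound: "cmod (G N t) \<le> real N"
proof -
  have "cmod (G N t) \<le> (\<Sum>a<N. cmod (cis t ^ a))" unfolding G_def by (rule norm_sum)
  also have "\<dots> = real N" by (simp add: norm_power)
  finally show ?thesis .
qed

lemma G_zero: "G N 0 = of_nat N"
  by (simp add: G_def)

lemma G_far: "cmod (G N t) * cmod (cis t - 1) \<le> 2"
proof -
  have "cis t ^ N - 1 = (cis t - 1) * G N t" unfolding G_def by (rule power_diff_1_eq)
  hence "cmod (G N t) * cmod (cis t - 1) = cmod (cis t ^ N - 1)"
    by (simp add: norm_mult)
  also have "\<dots> \<le> cmod (cis t ^ N) + cmod (1::complex)" by (rule norm_triangle_ineq4)
  also have "\<dots> = 2" by (simp add: norm_power)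
  finally show ?thesis .
qed

lemma norm_cis_minus_1: "cmod (cis t - 1) = 2 * \<bar>sin (t/2)\<bar>"
proof -
  have "(cmod (cis t - 1))^2 = (cos t - 1)^2 + (sin t)^2"
    by (simp add: cmod_def)
  also have "\<dots> = 2 - 2 * cos t" using sin_cos_squared_add[of t]
    by (simp add: power2_eq_square algebra_simps)
  also have "\<dots> = (2 * \<bar>sin (t/2)\<bar>)^2"
    using cos_double_sin[of "t/2"] by (simp add: power2_eq_square)
  finally show ?thesis
    by (metis abs_of_nonneg norm_ge_zero power2_eq_iff_nonneg zero_le_mult_iff abs_ge_zero
        zero_le_numeral)
qed

lemma sin_cubic: "x - x^3/6 \<le> sin (x::real)" if "x \<ge> 0"
proof -
  have "\<bar>sin x - (\<Sum>m<3. sin_coeff m * x ^ m)\<bar> \<le> inverse (fact 3) * \<bar>x\<bar> ^ 3"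
    by (rule Maclaurin_sin_bound)
  moreover have "(\<Sum>m<3. sin_coeff m * x ^ m) = x"
    by (simp add: sin_coeff_def numeral_3_eq_3)
  ultimately have "\<bar>sin x - x\<bar> \<le> x^3/6" using that by (simp add: fact_numeral)
  then show ?thesis using abs_ge_minus_self[of "sin x - x"] by linarith
qed

lemma sin_lower:
  assumes "0 < a" "a \<le> 1" "a/2 \<le> u" "u \<le> 1 - a/2"
  shows "a/2 \<le> sin (pi * u)"
proof -
  define v where "v = min u (1 - u)"
  have sv: "sin (pi * u) = sin (pi * v)"
  proof (cases "u \<le> 1 - u")
    case True then show ?thesis by (simp add: v_def)
  next
    case False
    hence "v = 1 - u" by (simp add: v_def)
    moreover have "sin (pi * (1 - u)) = sin (pi * u)"
      by (simp add: right_diff_distrib sin_diff)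
    ultimately show ?thesis by simp
  qed
  have v: "a/2 \<le> v" "v \<le> 1/2" using assms by (auto simp: v_def min_def)
  have "sin (pi * (a/2)) \<le> sin (pi * v)"
  proof -
    have h1: "-(pi/2) \<le> pi * (a/2)" proof -
      have "0 \<le> pi * (a/2)" using assms pi_gt_zero by simp
      thus ?thesis using pi_gt_zero by linarith
    qed
    have h2: "pi * (a/2) \<le> pi * v" using v(1) pi_gt_zero by (intro mult_left_mono) auto
    have h3: "pi * v \<le> pi * (1/2)" using v(2) pi_gt_zero by (intro mult_left_mono) auto
    show ?thesis by (rule sin_monotone_2pi_le[OF h1 h2]) (use h3 in simp)
  qed
  moreover have "a/2 \<le> sin (pi * (a/2))"
  proof -
    let ?x = "pi * (a/2)"
    have "?x - ?x^3/6 \<le> sin ?x" using assms by (intro sin_cubic) simp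
    moreover have "a/2 \<le> ?x - ?x^3/6"
    proof -
      have x0: "0 \<le> ?x" using assms by simp
      have "?x \<le> pi * (1/2)" using assms pi_gt_zero by (intro mult_left_mono) auto
      hence x2: "?x \<le> 2" using pi_less_4 by linarith
      have "?x^2 \<le> 2^2" using x0 x2 by (intro power_mono) auto
      hence "?x * ?x^2 \<le> ?x * 4" using x0 by (intro mult_left_mono) auto
      hence "?x^3/6 \<le> 2 * ?x / 3" by (simp add: power3_eq_cube power2_eq_square mult_ac)
      moreover have "a/2 \<le> ?x / 3" using assms pi_gt3 by (simp add: field_simps)
      ultimately show ?thesis by linarith
    qed
    ultimately show ?thesis by linarith
  qed
  ultimately show ?thesis using sv by linarith
qed

lemma cis_sum: "finite I \<Longrightarrow> cis (\<Sum>i\<in>I. f i) = (\<Prod>i\<in>I. cis (f i))"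
  by (simp add: cis_conv_exp sum_distrib_left exp_sum)

lemma G_sq: "complex_of_real ((cmod (G N t))^2) =
   (\<Sum>p\<in>{..<N}\<times>{..<N}. cis (real_of_int (int (fst p) - int (snd p)) * t))"
proof -
  have "complex_of_real ((cmod (G N t))^2) = G N t * cnj (G N t)" by (rule complex_norm_square)
  also have "\<dots> = (\<Sum>a<N. \<Sum>b<N. cis t ^ a * cnj (cis t ^ b))"
    unfolding G_def by (simp add: sum_product)
  also have "\<dots> = (\<Sum>a<N. \<Sum>b<N. cis (real_of_int (int a - int b) * t))"
  proof (intro sum.cong refl)
    fix a b :: nat
    have "cis t ^ a * cnj (cis t ^ b) = cis (real a * t) * cis (- (real b * t))"
      by (simp only: complex_cnj_power cis_cnj Complex.DeMoivre)
    also have "\<dots> = cis (real a * t + - (real b * t))" by (rule cis_mult)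
    also have "\<dots> = cis (real_of_int (int a - int b) * t)"
      by (simp add: algebra_simps)
    finally show "cis t ^ a * cnj (cis t ^ b) = cis (real_of_int (int a - int b) * t)" .
  qed
  also have "\<dots> = (\<Sum>p\<in>{..<N}\<times>{..<N}. cis (real_of_int (int (fst p) - int (snd p)) * t))"
    by (simp add: sum.cartesian_product case_prod_beta)
  finally show ?thesis .
qed



lemma finite_hyperbolic_rect: "finite (hyperbolic_rect (s::'d::finite \<Rightarrow> nat))"
proof -
  have "hyperbolic_rect s \<subseteq> PiE UNIV (\<lambda>j. {-(2^s j)..2^s j})"
    apply (auto simp: hyperbolic_rect_def PiE_def extensional_def abs_less_iff)
    subgoal for x j by (drule spec[of _ j]) linarith
    subgoal for x j by (drule spec[of _ j]) linarith
    done
  moreover have "finite (PiE (UNIV::'d set) (\<lambda>j. {-(2^s j)..(2::int)^s j}))"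
    by (intro finite_PiE) auto
  ultimately show ?thesis by (rule finite_subset)
qed

lemma poly_repr:
  fixes s :: "'d::finite \<Rightarrow> nat" and \<theta> :: "'d \<Rightarrow> real"
  shows "\<exists>c. \<forall>x. trig_poly (hyperbolic_rect s) c x =
     (\<Prod>j\<in>UNIV. complex_of_real ((cmod (G (2^s j) (x j - \<theta> j)))^2))"
proof -
  define A where "A = (\<lambda>j::'d. {..<(2::nat)^s j} \<times> {..<(2::nat)^s j})"
  define P where "P = PiE UNIV A"
  define h where "h = (\<lambda>(q::'d \<Rightarrow> nat \<times> nat) j. int (fst (q j)) - int (snd (q j)))"
  define R where "R = hyperbolic_rect s"
  have fP: "finite P" unfolding P_def A_def by (intro finite_PiE) auto
  have fR: "finite R" unfolding R_def by (rule finite_hyperbolic_rect)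
  have hPR: "h ` P \<subseteq> R"
  proof
    fix k assume "k \<in> h ` P"
    then obtain q where q: "q \<in> P" "k = h q" by blast
    show "k \<in> R" unfolding R_def hyperbolic_rect_def
    proof (safe)
      fix j
      have "q j \<in> A j" using q(1) unfolding P_def by auto
      hence "fst (q j) < 2^s j" "snd (q j) < 2^s j" unfolding A_def by auto
      hence "\<bar>int (fst (q j)) - int (snd (q j))\<bar> < int (2^s j)" by linarith
      thus "\<bar>k j\<bar> < 2 ^ s j" using q(2) unfolding h_def by simp
    qed
  qed
  define c where "c = (\<lambda>k. \<Sum>q\<in>{q\<in>P. h q = k}. cis (- (\<Sum>j\<in>UNIV. real_of_int (k j) * \<theta> j)))"
  show ?thesis
  proof (intro exI allI)
    fix x :: "'d \<Rightarrow> real"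
    have "(\<Prod>j\<in>UNIV. complex_of_real ((cmod (G (2^s j) (x j - \<theta> j)))^2))
        = (\<Prod>j\<in>UNIV. \<Sum>p\<in>A j. cis (real_of_int (int (fst p) - int (snd p)) * (x j - \<theta> j)))"
      unfolding A_def by (simp only: G_sq)
    also have "\<dots> = (\<Sum>q\<in>P. \<Prod>j\<in>UNIV. cis (real_of_int (h q j) * (x j - \<theta> j)))"
      unfolding P_def h_def by (rule prod_sum_PiE) (auto simp: A_def)
    also have "\<dots> = (\<Sum>q\<in>P. cis (\<Sum>j\<in>UNIV. real_of_int (h q j) * (x j - \<theta> j)))"
      by (simp add: cis_sum)
    also have "\<dots> = (\<Sum>k\<in>R. \<Sum>q\<in>{q\<in>P. h q = k}. cis (\<Sum>j\<in>UNIV. real_of_int (h q j) * (x j - \<theta> j)))"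
      by (rule sum.group[OF fP fR hPR, symmetric])
    also have "\<dots> = (\<Sum>k\<in>R. c k * cis (\<Sum>j\<in>UNIV. real_of_int (k j) * x j))"
    proof (intro sum.cong refl)
      fix k assume "k \<in> R"
      have "c k * cis (\<Sum>j\<in>UNIV. real_of_int (k j) * x j)
          = (\<Sum>q\<in>{q\<in>P. h q = k}. cis (- (\<Sum>j\<in>UNIV. real_of_int (k j) * \<theta> j)) * cis (\<Sum>j\<in>UNIV. real_of_int (k j) * x j))"
        unfolding c_def by (rule sum_distrib_right)
      also have "\<dots> = (\<Sum>q\<in>{q\<in>P. h q = k}. cis (\<Sum>j\<in>UNIV. real_of_int (h q j) * (x j - \<theta> j)))"
      proof (intro sum.cong refl)
        fix q assume "q \<in> {q\<in>P. h q = k}"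
        hence hq: "h q = k" by simp
        have "cis (- (\<Sum>j\<in>UNIV. real_of_int (k j) * \<theta> j)) * cis (\<Sum>j\<in>UNIV. real_of_int (k j) * x j)
           = cis (- (\<Sum>j\<in>UNIV. real_of_int (k j) * \<theta> j) + (\<Sum>j\<in>UNIV. real_of_int (k j) * x j))"
          by (rule cis_mult)
        also have "- (\<Sum>j\<in>UNIV. real_of_int (k j) * \<theta> j) + (\<Sum>j\<in>UNIV. real_of_int (k j) * x j)
            = (\<Sum>j\<in>UNIV. real_of_int (k j) * (x j - \<theta> j))"
          by (simp add: right_diff_distrib sum_subtractf)
        finally show "cis (- (\<Sum>j\<in>UNIV. real_of_int (k j) * \<theta> j)) * cis (\<Sum>j\<in>UNIV. real_of_int (k j) * x j)
           = cis (\<Sum>j\<in>UNIV. real_of_int (h q j) * (x j - \<theta> j))" using hq by simp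
      qed
      finally show "(\<Sum>q\<in>{q\<in>P. h q = k}. cis (\<Sum>j\<in>UNIV. real_of_int (h q j) * (x j - \<theta> j)))
          = c k * cis (\<Sum>j\<in>UNIV. real_of_int (k j) * x j)" by simp
    qed
    also have "\<dots> = trig_poly (hyperbolic_rect s) c x" unfolding trig_poly_def R_def ..
    finally show "trig_poly (hyperbolic_rect s) c x =
     (\<Prod>j\<in>UNIV. complex_of_real ((cmod (G (2^s j) (x j - \<theta> j)))^2))" by simp
  qed
qed



lemma choose_s:
  fixes a :: "'d::finite \<Rightarrow> real"
  assumes a: "\<forall>j. 0 < a j \<and> a j \<le> 1" and K: "K \<ge> 1"
    and vol: "(4*K)^CARD('d) * 2 powr - real n < (\<Prod>j\<in>UNIV. a j)"
  shows "\<exists>s::'d\<Rightarrow>nat. (\<Sum>j\<in>UNIV. s j) = n \<and> (\<forall>j. K \<le> 2^s j * a j)"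
proof -
  define r where "r j = nat \<lceil>log 2 (K / a j)\<rceil>" for j
  have r12: "K \<le> 2^r j * a j \<and> 2^r j \<le> 2*K / a j" for j
  proof -
    define l where "l = log 2 (K / a j)"
    have aj: "0 < a j" "a j \<le> 1" using a by auto
    have Ka: "1 \<le> K / a j" using aj K by (simp add: field_simps)
    have l0: "0 \<le> l" unfolding l_def using Ka by simp
    have "(2::real)^r j = 2 powr real (r j)" by (simp add: powr_realpow)
    also have "real (r j) = real_of_int \<lceil>l\<rceil>" unfolding r_def l_def[symmetric] using l0 by simp
    finally have e: "(2::real)^r j = 2 powr real_of_int \<lceil>l\<rceil>" .
    have "K / a j = 2 powr l" unfolding l_def using Ka by (simp add: powr_log_cancel)
    also have "\<dots> \<le> 2 powr real_of_int \<lceil>l\<rceil>" by (intro powr_mono) auto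
    finally have 1: "K / a j \<le> 2^r j" using e by simp
    have "2 powr real_of_int \<lceil>l\<rceil> \<le> 2 powr (l + 1)" by (intro powr_mono) linarith+
    also have "\<dots> = 2 * (K / a j)" unfolding powr_add l_def using Ka by (simp add: powr_log_cancel)
    finally have 2: "2^r j \<le> 2*K / a j" using e by simp
    show ?thesis using 1 2 aj by (simp add: field_simps)
  qed
  define P where "P = (\<Prod>j\<in>UNIV. a j)"
  have P0: "0 < P" unfolding P_def using a by (intro prod_pos) auto
  have "(2::real)^(\<Sum>j\<in>UNIV. r j) = (\<Prod>j\<in>UNIV. 2^r j)" by (rule power_sum)
  also have "\<dots> \<le> (\<Prod>j\<in>UNIV. 2*K / a j)" using r12 by (intro prod_mono) auto
  also have "\<dots> = (2*K)^CARD('d) / P" unfolding P_def by (simp add: prod_dividef)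
  also have "\<dots> < 2^n"
  proof -
    have "(2*K)^CARD('d) \<le> (4*K)^CARD('d)" using K by (intro power_mono) auto
    also have "\<dots> = (4*K)^CARD('d) * 2 powr - real n * 2^n"
      by (simp add: powr_minus powr_realpow)
    also have "\<dots> < P * 2^n" using vol unfolding P_def by (intro mult_strict_right_mono) auto
    finally show ?thesis using P0 by (simp add: field_simps)
  qed
  finally have "(\<Sum>j\<in>UNIV. r j) < n" by (subst (asm) power_strict_increasing_iff) auto
  define j0 :: 'd where "j0 = undefined"
  define s where "s j = r j + (if j = j0 then n - (\<Sum>j\<in>UNIV. r j) else 0)" for j
  have "(\<Sum>j\<in>UNIV. s j) = (\<Sum>j\<in>UNIV. r j) + (n - (\<Sum>j\<in>UNIV. r j))"
    unfolding s_def by (simp add: sum.distrib)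
  also have "\<dots> = n" using \<open>(\<Sum>j\<in>UNIV. r j) < n\<close> by simp
  finally have "(\<Sum>j\<in>UNIV. s j) = n" .
  moreover have "K \<le> 2^s j * a j" for j
  proof -
    have "(2::real)^r j \<le> 2^s j" unfolding s_def by (intro power_increasing) auto
    moreover have "0 \<le> a j" using a by (simp add: less_imp_le)
    ultimately have "2^r j * a j \<le> 2^s j * a j" by (rule mult_right_mono)
    thus ?thesis using r12[of j] by linarith
  qed
  ultimately show ?thesis by blast
qed

lemma nonempty_box:
  fixes T :: "('d::finite \<Rightarrow> real) set"
  assumes "finite T"
  shows "\<exists>x y. x \<in> unit_cube \<and> y \<in> unit_cube \<and> (\<forall>j. x j < y j) \<and> box_co x y \<inter> T = {}"
proof -
  define V where "V = (\<lambda>(t, j). t j) ` (T \<times> (UNIV::'d set))"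
  have fV: "finite V" unfolding V_def using assms by simp
  define b where "b = Min (insert (1/2) {v\<in>V. 0 < v})"
  have fin: "finite (insert (1/2::real) {v\<in>V. 0 < v})" using fV by simp
  have b0: "0 < b" unfolding b_def using fin by (subst Min_gr_iff) auto
  have b1: "b \<le> 1/2" unfolding b_def using fin by (intro Min_le) auto
  have bv: "b \<le> v" if "v \<in> V" "0 < v" for v unfolding b_def using fin that by (intro Min_le) auto
  show ?thesis
  proof (intro exI conjI)
    show "(\<lambda>j::'d. b/2) \<in> unit_cube" "(\<lambda>j::'d. b) \<in> unit_cube"
      using b0 b1 by (auto simp: unit_cube_def)
    show "\<forall>j. b/2 < b" using b0 by simp
    show "box_co (\<lambda>j::'d. b/2) (\<lambda>j. b) \<inter> T = {}"
    proof (rule ccontr)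
      assume "box_co (\<lambda>j::'d. b/2) (\<lambda>j. b) \<inter> T \<noteq> {}"
      then obtain t where t: "t \<in> T" "\<forall>j. b/2 \<le> t j \<and> t j < b" by (auto simp: box_co_def)
      define j :: 'd where "j = undefined"
      have "t j \<in> V" unfolding V_def using t(1) by force
      moreover have "0 < t j" using t(2)[rule_format, of j] b0 by linarith
      ultimately have "b \<le> t j" by (rule bv)
      moreover have "t j < b" using t(2) by blast
      ultimately show False by linarith
    qed
  qed
qed



lemma aux_dist: "0 \<le> (p::real) \<Longrightarrow> p<1 \<Longrightarrow> 0 \<le> x \<Longrightarrow> x < y \<Longrightarrow> y < 1 \<Longrightarrow> \<not>(x \<le> p \<and> p < y) \<Longrightarrow>
  (y-x)/2 \<le> \<bar>p - (x+y)/2\<bar> \<and> \<bar>p - (x+y)/2\<bar> \<le> 1 - (y-x)/2"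
  by (cases "p < x") (auto simp: abs_if field_simps)

lemma box_small:
  fixes x y :: "'d::finite \<Rightarrow> real" and T :: "('d \<Rightarrow> real) set"
  assumes C1: "C1 > 0" and K: "K \<ge> 1" "8 / C1 \<le> K"
    and T: "T \<subseteq> unit_cube" and ud: "univ_disc C1 n T"
    and xy: "x \<in> unit_cube" "y \<in> unit_cube" "\<forall>j. x j < y j" and disj: "box_co x y \<inter> T = {}"
  shows "(\<Prod>j\<in>UNIV. y j - x j) \<le> (4*K)^CARD('d) * 2 powr - real n"
proof (rule ccontr)
  assume "\<not> ?thesis"
  hence vol: "(4*K)^CARD('d) * 2 powr - real n < (\<Prod>j\<in>UNIV. y j - x j)" by simp
  define a where "a j = y j - x j" for j
  have a: "\<forall>j. 0 < a j \<and> a j \<le> 1"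
  proof
    fix j
    have "0 \<le> x j" "y j < 1" using xy(1,2) unfolding unit_cube_def by auto
    thus "0 < a j \<and> a j \<le> 1" using xy(3)[rule_format, of j] unfolding a_def by linarith
  qed
  obtain s :: "'d \<Rightarrow> nat" where s: "(\<Sum>j\<in>UNIV. s j) = n" "\<forall>j. K \<le> 2^s j * a j"
    using choose_s[OF a K(1)] vol unfolding a_def by blast
  define ctr where "ctr j = (x j + y j)/2" for j
  define \<theta> where "\<theta> j = 2*pi*ctr j" for j
  obtain c where c: "\<forall>z. trig_poly (hyperbolic_rect s) c z =
     (\<Prod>j\<in>UNIV. complex_of_real ((cmod (G (2^s j) (z j - \<theta> j)))^2))"
    using poly_repr by blast
  define f where "f = trig_poly (hyperbolic_rect s) c"
  define F where "F z j = (cmod (G (2^s j) (z j - \<theta> j)))^2" for z j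
  define M where "M = (\<Prod>j\<in>UNIV. (real (2^s j))^2)"
  have Mpos: "M > 0" unfolding M_def by (intro prod_pos) auto
  have fnorm: "cmod (f z) = (\<Prod>j\<in>UNIV. F z j)" for z
  proof -
    have "cmod (f z) = cmod (\<Prod>j\<in>UNIV. complex_of_real (F z j))" using c unfolding f_def F_def by simp
    also have "\<dots> = (\<Prod>j\<in>UNIV. cmod (complex_of_real (F z j)))" by (rule prod_norm[symmetric])
    also have "\<dots> = (\<Prod>j\<in>UNIV. F z j)" unfolding norm_of_real by (simp add: F_def)
    finally show ?thesis .
  qed
  have Fle: "F z j \<le> (real (2^s j))^2" "0 \<le> F z j" for z j
    unfolding F_def using G_bound[of "2^s j" "z j - \<theta> j"] by (auto intro!: power_mono)
  have fle: "cmod (f z) \<le> M" for z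
    unfolding fnorm M_def using Fle by (intro prod_mono) auto
  have fc: "cmod (f \<theta>) = M" unfolding fnorm M_def F_def by (simp add: G_zero norm_power)
  have xy01: "0 \<le> x j \<and> x j < 1 \<and> 0 \<le> y j \<and> y j < 1" for j
    using xy(1,2) by (auto simp: unit_cube_def)
  have ctr01: "0 \<le> ctr j \<and> ctr j < 1" for j using xy01[of j] unfolding ctr_def by auto
  have th: "\<theta> \<in> torus" unfolding torus_def \<theta>_def using ctr01 pi_gt_zero by auto
  have sup: "M \<le> sup_norm f"
  proof -
    have "bdd_above ((\<lambda>z. cmod (f z)) ` torus)" using fle by (intro bdd_aboveI2) auto
    moreover have "M \<in> (\<lambda>z. cmod (f z)) ` torus" using th fc by force
    ultimately show ?thesis unfolding sup_norm_def by (intro cSup_upper) auto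
  qed
  obtain \<xi> where \<xi>: "\<xi> \<in> T" "C1 * sup_norm f \<le> cmod (f (\<lambda>j. 2 * pi * \<xi> j))"
    using ud s(1) unfolding univ_disc_def f_def by blast
  obtain j where out: "\<not> (x j \<le> \<xi> j \<and> \<xi> j < y j)"
    using \<xi>(1) disj unfolding box_co_def by blast
  have \<xi>01: "0 \<le> \<xi> j" "\<xi> j < 1" using \<xi>(1) T unfolding unit_cube_def by auto
  define u where "u = \<bar>\<xi> j - ctr j\<bar>"
  have aj: "0 < a j" "a j \<le> 1" using a by auto
  have u1: "a j / 2 \<le> u" "u \<le> 1 - a j / 2"
    using aux_dist[OF \<xi>01 _ _ _ out] xy01[of j] xy(3)[rule_format, of j] unfolding u_def a_def ctr_def by auto
  define t where "t = 2 * pi * \<xi> j - \<theta> j"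
  have "cmod (cis t - 1) = 2 * \<bar>sin (t/2)\<bar>" by (rule norm_cis_minus_1)
  also have "\<bar>sin (t/2)\<bar> = sin (pi * u)"
  proof -
    have "t/2 = pi * (\<xi> j - ctr j)" unfolding t_def \<theta>_def by (simp add: field_simps)
    moreover have "0 \<le> sin (pi * u)" using u1 aj by (intro sin_ge_zero) (auto simp: u_def)
    moreover have "sin (pi * (ctr j - \<xi> j)) = - sin (pi * (\<xi> j - ctr j))"
      by (metis minus_diff_eq mult_minus_right sin_minus)
    ultimately show ?thesis unfolding u_def
      by (cases "0 \<le> \<xi> j - ctr j") (auto simp: abs_if)
  qed
  finally have ct: "a j \<le> cmod (cis t - 1)" using sin_lower[OF aj u1] by linarith
  have "cmod (G (2^s j) t) * a j \<le> 2"
  proof -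
    have "cmod (G (2^s j) t) * a j \<le> cmod (G (2^s j) t) * cmod (cis t - 1)"
      using ct by (intro mult_left_mono) auto
    thus ?thesis using G_far[of "2^s j" t] by linarith
  qed
  hence Gb: "cmod (G (2^s j) t) \<le> 2 / a j" using aj by (simp add: field_simps)
  define N where "N = real (2^s j)"
  have Fj: "F (\<lambda>j. 2 * pi * \<xi> j) j \<le> C1 / 2 * N^2"
  proof -
    have "F (\<lambda>j. 2 * pi * \<xi> j) j = (cmod (G (2^s j) t))^2" unfolding F_def t_def by simp
    also have "\<dots> \<le> (2 / a j)^2" using Gb by (intro power_mono) auto
    also have "\<dots> \<le> C1 / 2 * N^2"
    proof -
      have KN: "K \<le> N * a j" using s(2) unfolding N_def by simp
      have "8 / C1 \<le> K" by (rule K(2))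
      also have "K \<le> K^2" using K(1) by (simp add: power2_eq_square)
      also have "\<dots> \<le> (N * a j)^2" using KN K(1) by (intro power_mono) auto
      finally have "8 \<le> C1 * (N * a j)^2" using C1 by (simp add: field_simps)
      thus ?thesis using aj C1 by (simp add: field_simps power2_eq_square)
    qed
    finally show ?thesis .
  qed
  have "cmod (f (\<lambda>j. 2 * pi * \<xi> j)) = F (\<lambda>j. 2 * pi * \<xi> j) j * (\<Prod>i\<in>UNIV - {j}. F (\<lambda>j. 2 * pi * \<xi> j) i)"
    unfolding fnorm by (rule prod.remove) auto
  also have "\<dots> \<le> (C1 / 2 * N^2) * (\<Prod>i\<in>UNIV - {j}. (real (2^s i))^2)"
    using Fj Fle C1 by (intro mult_mono prod_mono prod_nonneg) auto
  also have "\<dots> = C1 / 2 * M"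
    unfolding M_def N_def by (subst prod.remove[of UNIV j]) auto
  finally have "cmod (f (\<lambda>j. 2 * pi * \<xi> j)) \<le> C1 / 2 * M" .
  moreover have "C1 * M \<le> C1 * sup_norm f" using sup C1 by simp
  moreover have "0 < C1 * M" using Mpos C1 by simp
  ultimately show False using \<xi>(2) by linarith
qed

theorem theorem2p2:
  assumes "CARD('d::finite) \<ge> 2" and "C1 > 0"
  shows "\<exists>C>0. \<forall>(n::nat) (T::('d \<Rightarrow> real) set).
           finite T \<and> T \<subseteq> unit_cube \<and> univ_disc C1 n T \<longrightarrow> disp T \<le> C * 2 powr (- real n)"
proof -
  define K where "K = 8 / C1 + 1"
  have K: "K \<ge> 1" "8 / C1 \<le> K" using assms(2) unfolding K_def by auto
  show ?thesis
  proof (intro exI[of _ "(4*K)^CARD('d)"] conjI allI impI)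
    show "0 < (4*K)^CARD('d)" using K by simp
    fix n :: nat and T :: "('d \<Rightarrow> real) set"
    assume h: "finite T \<and> T \<subseteq> unit_cube \<and> univ_disc C1 n T"
    show "disp T \<le> (4*K)^CARD('d) * 2 powr - real n"
      unfolding disp_def
    proof (rule cSup_least)
      show "{(\<Prod>j\<in>UNIV. y j - x j) | x y.
        x \<in> unit_cube \<and> y \<in> unit_cube \<and> (\<forall>j. x j < y j) \<and> box_co x y \<inter> T = {}} \<noteq> {}"
        using nonempty_box[of T] h by blast
    next
      fix v assume "v \<in> {(\<Prod>j\<in>UNIV. y j - x j) | x y.
        x \<in> unit_cube \<and> y \<in> unit_cube \<and> (\<forall>j. x j < y j) \<and> box_co x y \<inter> (T::('d \<Rightarrow> real) set) = {}}"
      then obtain x y :: "'d \<Rightarrow> real" where v: "v = (\<Prod>j\<in>UNIV. y j - x j)"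
        and xy: "x \<in> unit_cube" "y \<in> unit_cube" "\<forall>j. x j < y j" "box_co x y \<inter> T = {}" by blast
      show "v \<le> (4*K)^CARD('d) * 2 powr - real n"
        unfolding v using box_small[OF assms(2) K, of T n x y] h xy by blast
    qed
  qed
qed

end
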